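(* For any sequence $\{z_k\}_{k\ge1}$ of complex numbers, for Lebesgue-almost every $r\in(0,\infty)$ we have $\liminf_{n\to\infty}\left(\inf_{|z|=r}|z-z_n|\right)^{1/n}\ge1$. *)

theory Defs
  imports "HOL-Analysis.Analysis"
begin

end

theory Submission
  imports Defs
begin

lemma inf_lower:
  fixes z :: complex assumes "r > 0"
  shows "\<bar>r - cmod z\<bar> \<le> (INF w\<in>sphere 0 r. cmod (w - z))"
proof (rule cINF_greatest)
  have "complex_of_real r \<in> sphere 0 r" using assms by simp
  then show "sphere (0::complex) r \<noteq> {}" by (metis empty_iff)
next
  fix w assume "w \<in> sphere (0::complex) r"
  then have "cmod w = r" by simp
  moreover have "\<bar>cmod w - cmod z\<bar> \<le> cmod (w - z)" by (rule norm_triangle_ineq3)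
  ultimately show "\<bar>r - cmod z\<bar> \<le> cmod (w - z)"
    by simp
qed

lemma step:
  fixes z :: "nat \<Rightarrow> complex" and c :: real
  assumes c: "0 < c" "c < 1"
  shows "AE r in lborel. r > 0 \<longrightarrow>
           Liminf sequentially
             (\<lambda>n. ereal ((INF w\<in>sphere 0 r. cmod (w - z n)) powr (1 / real n))) \<ge> ereal c"
proof -
  define A where "A n = {cmod (z n) - c^n <..< cmod (z n) + c^n}" for n
  have meas: "measure lborel (A n) = 2 * c^n" for n
    unfolding A_def using c by (subst measure_lborel_Ioo) auto
  have "AE x in lborel. eventually (\<lambda>n. x \<in> space lborel - A n) sequentially"
  proof (rule borel_cantelli_AE1)
    show "A n \<in> sets lborel" for n unfolding A_def by simp
    show "emeasure lborel (A n) < \<infinity>" for n unfolding A_def using c by (subst emeasure_lborel_Ioo) auto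
    show "summable (\<lambda>n. measure lborel (A n))" unfolding meas
      using c by (intro summable_mult summable_geometric) auto
  qed
  then show ?thesis
  proof (rule AE_mp, intro AE_I2 impI)
    fix r :: real
    assume ev: "eventually (\<lambda>n. r \<in> space lborel - A n) sequentially" and r: "r > 0"
    show "Liminf sequentially
             (\<lambda>n. ereal ((INF w\<in>sphere 0 r. cmod (w - z n)) powr (1 / real n))) \<ge> ereal c"
    proof (rule Liminf_bounded)
      have "eventually (\<lambda>n. r \<in> space lborel - A n \<and> n > 0) sequentially"
        using ev eventually_gt_at_top[of 0] by (rule eventually_conj)
      then show "\<forall>\<^sub>F n in sequentially. ereal c \<le> ereal ((INF w\<in>sphere 0 r. cmod (w - z n)) powr (1 / real n))"
      proof (rule eventually_mono)
        fix n assume h: "r \<in> space lborel - A n \<and> 0 < n"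
        then have "c^n \<le> \<bar>r - cmod (z n)\<bar>" unfolding A_def by auto
        also have "\<dots> \<le> (INF w\<in>sphere 0 r. cmod (w - z n))" using inf_lower r by blast
        finally have le: "c^n \<le> (INF w\<in>sphere 0 r. cmod (w - z n))" .
        have "c = (c^n) powr (1 / real n)"
          using c h by (simp add: powr_realpow[symmetric] powr_powr)
        also have "\<dots> \<le> (INF w\<in>sphere 0 r. cmod (w - z n)) powr (1 / real n)"
          using le c by (intro powr_mono2) auto
        finally show "ereal c \<le> ereal ((INF w\<in>sphere 0 r. cmod (w - z n)) powr (1 / real n))"
          by simp
      qed
    qed
  qed
qed

theorem mainTheorem10:
  fixes z :: "nat \<Rightarrow> complex"
  shows "AE r in lborel. r > 0 \<longrightarrow>
           Liminf sequentially
             (\<lambda>n. ereal ((INF w\<in>sphere 0 r. cmod (w - z n)) powr (1 / real n))) \<ge> 1"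
proof -
  have "\<forall>m::nat. AE r in lborel. r > 0 \<longrightarrow>
           Liminf sequentially
             (\<lambda>n. ereal ((INF w\<in>sphere 0 r. cmod (w - z n)) powr (1 / real n))) \<ge> ereal (1 - 1 / (real m + 2))"
    by (intro allI step) (auto simp: field_simps)
  then have "AE r in lborel. \<forall>m::nat. r > 0 \<longrightarrow>
           Liminf sequentially
             (\<lambda>n. ereal ((INF w\<in>sphere 0 r. cmod (w - z n)) powr (1 / real n))) \<ge> ereal (1 - 1 / (real m + 2))"
    by (subst AE_all_countable) auto
  then show ?thesis
  proof (rule AE_mp, intro AE_I2 impI)
    fix r :: real and L
    assume "\<forall>m::nat. r > 0 \<longrightarrow> L \<ge> ereal (1 - 1 / (real m + 2))" and "r > 0"
    then have bnd: "\<And>m::nat. L \<ge> ereal (1 - 1 / (real m + 2))" by auto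
    have "(\<lambda>m. inverse (real (Suc (Suc m)))) \<longlonglongrightarrow> 0"
      by (rule LIMSEQ_Suc[OF LIMSEQ_inverse_real_of_nat])
    then have "(\<lambda>m::nat. 1 - 1 / (real m + 2)) \<longlonglongrightarrow> 1 - 0"
      by (intro tendsto_diff tendsto_const) (simp add: divide_inverse add.commute)
    then have lim: "(\<lambda>m::nat. ereal (1 - 1 / (real m + 2))) \<longlonglongrightarrow> ereal 1"
      by (intro tendsto_ereal) simp
    have "ereal 1 \<le> L"
      by (rule LIMSEQ_le_const2[OF lim]) (intro exI[of _ 0] allI impI bnd)
    then show "1 \<le> L" by (simp add: one_ereal_def)
  qed
qed

end
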